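(* Let $q,n$ be positive integers. For every $j\in\{0,1,\dots,q-1\}$, the code $$\mathcal C_q^{(j)}(n;q-1)=\Big\{\mathbf x\in[q]^n:\ \sum_{i=1}^n x_i\equiv j\pmod{q}\Big\}$$ is an optimal $(\cdot,1,\cdot)$-AED code in $[q]^n$ (it is $(\cdot,1,\cdot)$-AED and has maximum cardinality among such codes), and $|\mathcal C_q^{(j)}(n;q-1)|=q^{n-1}$.
   Context: $[q]=\{0,1,\dots,q-1\}$. Channel over $[q]$ with $(\cdot,1,\cdot)$-asymmetric errors (a single asymmetric error of arbitrary magnitude): an input $\mathbf x\in[q]^n$ can produce any output $\mathbf y\in[q]^n$ with $y_i\ge x_i$ for all $i$ and $y_i\ne x_i$ for at most one index $i$. $\mathrm{Out}(\mathbf x)$ denotes the set of all such outputs. A code $\mathcal C\subseteq[q]^n$ is $(\cdot,1,\cdot)$-AED if for all $\mathbf x\in\mathcal C$ and $\mathbf y\in\mathrm{Out}(\mathbf x)$ with $\mathbf y\ne\mathbf x$, we have $\mathbf y\notin\mathcal C$. *)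

theory Defs
  imports Main
begin

definition words :: "nat \<Rightarrow> nat \<Rightarrow> nat list set" where
  "words q n = {x. length x = n \<and> (\<forall>i<n. x ! i < q)}"

definition Out :: "nat \<Rightarrow> nat list \<Rightarrow> nat list set" where
  "Out q x = {y \<in> words q (length x).
      (\<forall>i<length x. x ! i \<le> y ! i) \<and> card {i. i < length x \<and> y ! i \<noteq> x ! i} \<le> 1}"

definition AED1 :: "nat \<Rightarrow> nat \<Rightarrow> nat list set \<Rightarrow> bool" where
  "AED1 q n C \<longleftrightarrow> C \<subseteq> words q n \<and>
     (\<forall>x\<in>C. \<forall>y\<in>Out q x. y \<noteq> x \<longrightarrow> y \<notin> C)"

definition optimal_AED1 :: "nat \<Rightarrow> nat \<Rightarrow> nat list set \<Rightarrow> bool" where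
  "optimal_AED1 q n C \<longleftrightarrow> AED1 q n C \<and> (\<forall>D. AED1 q n D \<longrightarrow> card D \<le> card C)"

definition sum_code :: "nat \<Rightarrow> nat \<Rightarrow> nat \<Rightarrow> nat list set" where
  "sum_code q n j = {x \<in> words q n. sum_list x mod q = j mod q}"

end

theory Submission
  imports Defs
begin

lemma words_eq: "words q n = {xs. set xs \<subseteq> {0..<q} \<and> length xs = n}"
  unfolding words_def by (auto simp: in_set_conv_nth subset_iff)

lemma words_finite: "finite (words q n)"
  unfolding words_eq by (simp add: finite_lists_length_eq)

lemma words_card: "card (words q n) = q ^ n"
  unfolding words_eq by (simp add: card_lists_length_eq)

lemma words_Cons: "(a # t \<in> words q (Suc m)) \<longleftrightarrow> a < q \<and> t \<in> words q m"
  unfolding words_eq by auto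

lemma mod_add_small:
  fixes s d q :: nat
  assumes "0 < d" "d < q" shows "(s + d) mod q \<noteq> s mod q"
proof
  assume "(s + d) mod q = s mod q"
  then have "q dvd (s + d) - s" using mod_eq_dvd_iff_nat[of s "s+d" q] by simp
  then have "q dvd d" by simp
  with assms show False by (simp add: nat_dvd_not_less)
qed

lemma sum_code_AED:
  assumes "q > 0"
  shows "AED1 q n (sum_code q n j)"
  unfolding AED1_def
proof (intro conjI ballI impI)
  show "sum_code q n j \<subseteq> words q n" unfolding sum_code_def by auto
next
  fix x y assume x: "x \<in> sum_code q n j" and y: "y \<in> Out q x" and ne: "y \<noteq> x"
  show "y \<notin> sum_code q n j"
  proof
    assume yc: "y \<in> sum_code q n j"
    have lx: "length x = n" "\<forall>i<n. x!i < q" using x unfolding sum_code_def words_def by auto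
    have ly: "length y = n" "\<forall>i<n. y!i < q" using yc unfolding sum_code_def words_def by auto
    have ge: "\<forall>i<n. x!i \<le> y!i" and cd: "card {i. i < n \<and> y ! i \<noteq> x ! i} \<le> 1"
      using y lx unfolding Out_def by auto
    obtain i where i: "i < n" "y!i \<noteq> x!i"
      using ne lx ly nth_equalityI[of y x] by auto
    have S: "{i. i < n \<and> y ! i \<noteq> x ! i} = {i}"
    proof -
      have fin: "finite {i. i < n \<and> y ! i \<noteq> x ! i}" by simp
      have "i \<in> {i. i < n \<and> y ! i \<noteq> x ! i}" using i by auto
      moreover have "k = i" if "k \<in> {i. i < n \<and> y ! i \<noteq> x ! i}" for k
      proof (rule ccontr)
        assume "k \<noteq> i"
        then have "card {i, k} \<le> card {i. i < n \<and> y ! i \<noteq> x ! i}"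
          using that \<open>i \<in> _\<close> fin by (intro card_mono) auto
        then show False using \<open>k \<noteq> i\<close> cd by simp
      qed
      ultimately show ?thesis by blast
    qed
    have yeq: "y = x[i := y!i]"
    proof (rule nth_equalityI)
      show "length y = length (x[i := y ! i])" using lx ly by simp
      fix k assume "k < length y"
      then show "y ! k = x[i := y ! i] ! k" using S lx ly by (cases "k = i") auto
    qed
    have "sum_list y = sum_list x + y!i - x!i"
      using yeq sum_list_update[of i x "y!i"] i lx by simp
    moreover have "x!i \<le> sum_list x" using i lx
      by (metis elem_le_sum_list)
    ultimately have sy: "sum_list y = sum_list x + (y!i - x!i)" using ge i by simp
    have "0 < y!i - x!i" "y!i - x!i < q" using i ge ly by auto
    then have "sum_list y mod q \<noteq> sum_list x mod q" unfolding sy by (rule mod_add_small)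
    then show False using x yc unfolding sum_code_def by simp
  qed
qed

lemma AED_bound:
  assumes "n > 0" "AED1 q n D"
  shows "card D \<le> q ^ (n - 1)"
proof -
  have sub: "D \<subseteq> words q n" using assms unfolding AED1_def by auto
  have inj: "inj_on tl D"
  proof
    fix x z assume x: "x \<in> D" and z: "z \<in> D" and t: "tl x = tl z"
    obtain m where m: "n = Suc m" using assms by (cases n) auto
    have "length x = n" "length z = n" using x z sub unfolding words_def by auto
    then obtain a b t' where xa: "x = a # t'" and zb: "z = b # t'"
      using t m by (cases x; cases z) auto
    show "x = z"
    proof (rule ccontr)
      assume ne: "x \<noteq> z"
      have key: "\<And>u v c d. u \<in> D \<Longrightarrow> v \<in> D \<Longrightarrow> u = c # t' \<Longrightarrow> v = d # t' \<Longrightarrow> c < d \<Longrightarrow> False"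
      proof -
        fix u v c d assume u: "u \<in> D" and v: "v \<in> D" and uc: "u = c # t'" and vd: "v = d # t'" and cd: "c < d"
        have "{i. i < length u \<and> v ! i \<noteq> u ! i} \<subseteq> {0}"
          using uc vd by (auto simp: nth_Cons')
        then have "card {i. i < length u \<and> v ! i \<noteq> u ! i} \<le> 1"
          using card_mono[of "{0::nat}"] by fastforce
        moreover have "\<forall>i<length u. u ! i \<le> v ! i" using uc vd cd by (auto simp: nth_Cons split: nat.splits)
        moreover have "v \<in> words q (length u)" using v sub uc vd unfolding words_def by auto
        ultimately have "v \<in> Out q u" unfolding Out_def by auto
        moreover have "v \<noteq> u" using uc vd cd by auto
        ultimately show False using u v assms(2) unfolding AED1_def by blast
      qed
      have "a \<noteq> b" using ne xa zb by auto
      then show False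
      proof (cases "a < b")
        case True then show False using key[OF x z xa zb] by blast
      next
        case False then have "b < a" using \<open>a \<noteq> b\<close> by simp
        then show False using key[OF z x zb xa] by blast
      qed
    qed
  qed
  have "tl ` D \<subseteq> words q (n - 1)" using sub unfolding words_def by (auto simp: nth_tl)
  then have "card (tl ` D) \<le> card (words q (n - 1))"
    by (rule card_mono[OF words_finite])
  then have "card (tl ` D) \<le> q ^ (n - 1)" by (simp only: words_card)
  then show ?thesis using card_image[OF inj] by simp
qed

theorem corollary1:
  fixes q n j :: nat
  assumes "q > 0" and "n > 0" and "j < q"
  shows "optimal_AED1 q n (sum_code q n j) \<and> card (sum_code q n j) = q ^ (n - 1)"
proof -
  have A: "AED1 q n (sum_code q n j)" using sum_code_AED assms by simp
  have le: "card (sum_code q n j) \<le> q ^ (n - 1)" using AED_bound assms A by simp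
  obtain m where m: "n = Suc m" using assms by (cases n) auto
  define c where "c t = (j + q - sum_list t mod q) mod q" for t :: "nat list"
  have inj: "inj_on (\<lambda>t. c t # t) (words q m)" by (auto intro: inj_onI)
  have img: "(\<lambda>t. c t # t) ` words q m \<subseteq> sum_code q n j"
  proof
    fix y assume "y \<in> (\<lambda>t. c t # t) ` words q m"
    then obtain t where t: "t \<in> words q m" and y: "y = c t # t" by auto
    have "c t < q" using assms unfolding c_def by simp
    moreover have "(c t + sum_list t) mod q = j"
    proof -
      have "(c t + sum_list t) mod q = (j + q - sum_list t mod q + sum_list t) mod q"
        unfolding c_def by (simp add: mod_add_left_eq)
      also have "j + q - sum_list t mod q + sum_list t = j + q + q * (sum_list t div q)"
        using mod_less_divisor[OF assms(1), of "sum_list t"] mult_div_mod_eq[of q "sum_list t"]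
        by linarith
      also have "(j + q + q * (sum_list t div q)) mod q = j" using assms by simp
      finally show ?thesis .
    qed
    ultimately show "y \<in> sum_code q n j"
      using t y m assms unfolding sum_code_def by (simp add: words_Cons)
  qed
  have "q ^ (n - 1) = card ((\<lambda>t. c t # t) ` words q m)"
    using card_image[OF inj] words_card m by simp
  also have "\<dots> \<le> card (sum_code q n j)"
  proof (rule card_mono[OF _ img])
    show "finite (sum_code q n j)"
      by (rule finite_subset[OF _ words_finite[of q n]]) (auto simp: sum_code_def)
  qed
  finally have ge: "q ^ (n - 1) \<le> card (sum_code q n j)" .
  have eq: "card (sum_code q n j) = q ^ (n - 1)" using le ge by (rule antisym)
  show ?thesis using A eq AED_bound[OF assms(2)] unfolding optimal_AED1_def by simp
qed

end
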